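(* Fix a student with strict utilities $u$ over $C$ and a ROL $R$ such that, for every state $\omega$ with $B(\omega)\neq\emptyset$, the assigned school $\alpha_R(\omega)$ is defined and equals the $u$-best school in $B(\omega)$. Assume the feasible sets $B(\omega)$ do not depend on the student's own ROL. Then: (i) For any ROL $R'$, $\alpha_{R'}(\omega)$ is the $u$-best school in $B(\omega)$ for every state $\omega$ with $B(\omega)\ne\emptyset$ if and only if $R'\in\mathcal R^*(R)$. (ii) $\mathcal P^{all}(R')=\mathcal P^{all}(R)$ for every $R'\in\mathcal R^*(R)$. (iii) For any strict utility vector $u'$ on $C$ and any ROL $R''$ such that $\alpha_{R''}(\omega)$ is the $u'$-best school of $B(\omega)$ for every $\omega$ with $B(\omega)\ne\emptyset$, we have $\mathcal P^{all}(R'')=\mathcal P^{all}(R)$ if and only if $u'\in\mathcal U^*(R)$.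
   Context: Setting: finite set of schools $C$ (no outside option). $(\Omega,\Pr)$ is a probability space of states; each state determines the student's feasible set $B(\omega)\subseteq C$, taking finitely many values. A ROL is an ordered list of distinct schools of $C$. For a ROL $R$, the assigned school $\alpha_R(\omega)$ is the highest-ranked school of $R$ in $B(\omega)$ (undefined if none). $\tilde{\mathcal P}(R)=\{(\alpha_R(\omega),c):\omega\in\Omega,\ \alpha_R(\omega)\text{ defined},\ c\in B(\omega)\setminus\{\alpha_R(\omega)\}\}$ ($(x,y)$ meaning "$x$ inferred preferred to $y$"), and $\mathcal P^{all}(R)$ is the transitive closure of $\tilde{\mathcal P}(R)$. $\mathcal R^*(R)$ is the set of ROLs $R'$ such that (1) every ever-assigned school $\alpha_R(\omega)$ (over all $\omega$) is listed in $R'$, and (2) there are no schools $c,c'$ with $c'$ listed above $c$ in $R'$ and $(c,c')\in\mathcal P^{all}(R)$. For a strict utility vector $u'$, $\rho(u')$ is the ROL listing all schools of $C$ in decreasing order of $u'$; $\mathcal U^*(R)$ is the set of strict utility vectors $u'$ with $\rho(u')\in\mathcal R^*(R)$. *)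

theory Defs
  imports Complex_Main
begin

definition is_ROL :: "'c set \<Rightarrow> 'c list \<Rightarrow> bool" where
  "is_ROL C R \<longleftrightarrow> distinct R \<and> set R \<subseteq> C"

definition alpha :: "'c list \<Rightarrow> 'c set \<Rightarrow> 'c option" where
  "alpha R S = find (\<lambda>c. c \<in> S) R"

definition is_best :: "('c \<Rightarrow> real) \<Rightarrow> 'c set \<Rightarrow> 'c \<Rightarrow> bool" where
  "is_best u S c \<longleftrightarrow> c \<in> S \<and> (\<forall>c'\<in>S. u c' \<le> u c)"

text \<open>(x,y) in Ptilde: x inferred preferred to y.\<close>
definition Ptilde :: "'s set \<Rightarrow> ('s \<Rightarrow> 'c set) \<Rightarrow> 'c list \<Rightarrow> ('c \<times> 'c) set" where
  "Ptilde Omega B R = {(a, c). \<exists>\<omega>\<in>Omega. alpha R (B \<omega>) = Some a \<and> c \<in> B \<omega> \<and> c \<noteq> a}"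

definition Pall :: "'s set \<Rightarrow> ('s \<Rightarrow> 'c set) \<Rightarrow> 'c list \<Rightarrow> ('c \<times> 'c) set" where
  "Pall Omega B R = (Ptilde Omega B R)\<^sup>+"

definition listed_above :: "'c list \<Rightarrow> 'c \<Rightarrow> 'c \<Rightarrow> bool" where
  "listed_above R' c' c \<longleftrightarrow> (\<exists>i j. i < j \<and> j < length R' \<and> R' ! i = c' \<and> R' ! j = c)"

definition Rstar :: "'c set \<Rightarrow> 's set \<Rightarrow> ('s \<Rightarrow> 'c set) \<Rightarrow> 'c list \<Rightarrow> 'c list set" where
  "Rstar C Omega B R = {R'. is_ROL C R'
      \<and> (\<forall>\<omega>\<in>Omega. \<forall>a. alpha R (B \<omega>) = Some a \<longrightarrow> a \<in> set R')
      \<and> \<not> (\<exists>c c'. listed_above R' c' c \<and> (c, c') \<in> Pall Omega B R)}"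

definition rho :: "'c set \<Rightarrow> ('c \<Rightarrow> real) \<Rightarrow> 'c list" where
  "rho C u' = (THE L. set L = C \<and> sorted_wrt (\<lambda>x y. u' x > u' y) L)"

definition Ustar :: "'c set \<Rightarrow> 's set \<Rightarrow> ('s \<Rightarrow> 'c set) \<Rightarrow> 'c list \<Rightarrow> ('c \<Rightarrow> real) set" where
  "Ustar C Omega B R = {u'. inj_on u' C \<and> rho C u' \<in> Rstar C Omega B R}"

end

theory Submission
  imports Defs
begin

lemma alpha_SomeD:
  assumes "alpha R S = Some a"
  shows "a \<in> S \<and> a \<in> set R \<and> (\<exists>k<length R. R!k = a \<and> (\<forall>j<k. R!j \<notin> S))"
  using assms unfolding alpha_def find_Some_iff by auto

lemma alpha_empty: "alpha R {} = None"
  unfolding alpha_def by (simp add: find_None_iff)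

lemma alpha_not_above:
  assumes "distinct R" "alpha R S = Some a" "b \<in> S"
  shows "\<not> listed_above R b a"
proof
  assume "listed_above R b a"
  then obtain i j where ij: "i < j" "j < length R" "R!i = b" "R!j = a"
    unfolding listed_above_def by auto
  obtain k where k: "k < length R" "R!k = a" "\<forall>j<k. R!j \<notin> S"
    using alpha_SomeD[OF assms(2)] by auto
  have "k = j" using assms(1) k ij nth_eq_iff_index_eq by metis
  thus False using k ij assms(3) by auto
qed

lemma alpha_intro:
  assumes "distinct R" "a \<in> S" "a \<in> set R"
    "\<forall>b\<in>S. b \<noteq> a \<longrightarrow> \<not> listed_above R b a"
  shows "alpha R S = Some a"
proof -
  obtain k where k: "k < length R" "R!k = a" using assms(3) by (auto simp: in_set_conv_nth)
  have "\<forall>j<k. R!j \<notin> S"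
  proof (intro allI impI)
    fix j assume "j < k"
    show "R!j \<notin> S"
    proof
      assume h: "R!j \<in> S"
      have "R!j \<noteq> a" using assms(1) k \<open>j<k\<close> nth_eq_iff_index_eq by fastforce
      moreover have "listed_above R (R!j) a" unfolding listed_above_def
        using \<open>j<k\<close> k by blast
      ultimately show False using assms(4) h by blast
    qed
  qed
  thus ?thesis unfolding alpha_def find_Some_iff using k assms(2) by blast
qed

lemma listed_above_total:
  assumes "a \<in> set R" "b \<in> set R" "a \<noteq> b"
  shows "listed_above R a b \<or> listed_above R b a"
proof -
  obtain i j where "i < length R" "R!i = a" "j < length R" "R!j = b"
    using assms by (auto simp: in_set_conv_nth)
  moreover have "i \<noteq> j" using calculation assms(3) by auto
  ultimately show ?thesis unfolding listed_above_def
    by (metis linorder_neqE_nat)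
qed

lemma listed_above_trans:
  assumes "distinct R" "listed_above R a b" "listed_above R b c"
  shows "listed_above R a c"
proof -
  obtain i j where ij: "i < j" "j < length R" "R!i = a" "R!j = b"
    using assms(2) unfolding listed_above_def by auto
  obtain j' k where jk: "j' < k" "k < length R" "R!j' = b" "R!k = c"
    using assms(3) unfolding listed_above_def by auto
  have "j = j'" using assms(1) ij jk nth_eq_iff_index_eq by (metis order.strict_trans)
  thus ?thesis unfolding listed_above_def using ij jk by (metis order.strict_trans)
qed

lemma listed_above_asym:
  assumes "distinct R" "listed_above R a b" "listed_above R b a"
  shows False
proof -
  obtain i j where ij: "i < j" "j < length R" "R!i = a" "R!j = b"
    using assms(2) unfolding listed_above_def by auto
  obtain j' k where jk: "j' < k" "k < length R" "R!j' = b" "R!k = a"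
    using assms(3) unfolding listed_above_def by auto
  have "j = j'" "i = k" using assms(1) ij jk nth_eq_iff_index_eq by (metis order.strict_trans)+
  thus False using ij jk by auto
qed

lemma best_unique:
  assumes "inj_on v C" "S \<subseteq> C" "is_best v S a" "is_best v S b"
  shows "a = b"
  using assms unfolding is_best_def inj_on_def
  by (metis order_antisym subsetD)

definition good :: "'s set \<Rightarrow> ('s \<Rightarrow> 'c set) \<Rightarrow> ('c \<Rightarrow> real) \<Rightarrow> 'c list \<Rightarrow> bool" where
  "good Omega B v R' \<longleftrightarrow> (\<forall>\<omega>\<in>Omega. B \<omega> \<noteq> {} \<longrightarrow> (\<exists>a. alpha R' (B \<omega>) = Some a \<and> is_best v (B \<omega>) a))"

lemma good_alpha_eq:
  assumes "inj_on v C" "\<forall>\<omega>\<in>Omega. B \<omega> \<subseteq> C" "good Omega B v R1" "good Omega B v R2"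
    "\<omega> \<in> Omega"
  shows "alpha R1 (B \<omega>) = alpha R2 (B \<omega>)"
proof (cases "B \<omega> = {}")
  case True thus ?thesis by (simp add: alpha_empty)
next
  case False
  then obtain a b where "alpha R1 (B \<omega>) = Some a" "is_best v (B \<omega>) a"
    "alpha R2 (B \<omega>) = Some b" "is_best v (B \<omega>) b"
    using assms unfolding good_def by metis
  thus ?thesis using best_unique assms by metis
qed

lemma good_Pall_eq:
  assumes "inj_on v C" "\<forall>\<omega>\<in>Omega. B \<omega> \<subseteq> C" "good Omega B v R1" "good Omega B v R2"
  shows "Pall Omega B R1 = Pall Omega B R2"
proof -
  have "Ptilde Omega B R1 = Ptilde Omega B R2"
    unfolding Ptilde_def using good_alpha_eq[OF assms] by auto
  thus ?thesis unfolding Pall_def by simp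
qed

lemma good_Ptilde_lt:
  assumes "inj_on v C" "\<forall>\<omega>\<in>Omega. B \<omega> \<subseteq> C" "good Omega B v R1"
    "(x, y) \<in> Ptilde Omega B R1"
  shows "v y < v x"
proof -
  obtain \<omega> where w: "\<omega> \<in> Omega" "alpha R1 (B \<omega>) = Some x" "y \<in> B \<omega>" "y \<noteq> x"
    using assms(4) unfolding Ptilde_def by auto
  have "B \<omega> \<noteq> {}" using w by auto
  then obtain a where "alpha R1 (B \<omega>) = Some a" "is_best v (B \<omega>) a"
    using assms(3) w(1) unfolding good_def by auto
  hence "is_best v (B \<omega>) x" using w by simp
  hence "v y \<le> v x" "x \<in> B \<omega>" using w unfolding is_best_def by auto
  moreover have "v y \<noteq> v x" using assms(1,2) w \<open>x \<in> B \<omega>\<close> unfolding inj_on_def by blast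
  ultimately show ?thesis by simp
qed

lemma good_Pall_lt:
  assumes "inj_on v C" "\<forall>\<omega>\<in>Omega. B \<omega> \<subseteq> C" "good Omega B v R1"
    "(x, y) \<in> Pall Omega B R1"
  shows "v y < v x"
  using assms(4) unfolding Pall_def
proof (induction rule: trancl_induct)
  case (base y) thus ?case using good_Ptilde_lt[OF assms(1-3)] by blast
next
  case (step y z) thus ?case using good_Ptilde_lt[OF assms(1-3)] by fastforce
qed

lemma Ptilde_listed:
  assumes "distinct R1" "(x, y) \<in> Ptilde Omega B R1" "y \<in> set R1"
  shows "listed_above R1 x y"
proof -
  obtain \<omega> where w: "\<omega> \<in> Omega" "alpha R1 (B \<omega>) = Some x" "y \<in> B \<omega>" "y \<noteq> x"
    using assms(2) unfolding Ptilde_def by auto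
  have "x \<in> set R1" using alpha_SomeD[OF w(2)] by auto
  thus ?thesis using listed_above_total[OF _ assms(3)] alpha_not_above[OF assms(1) w(2,3)] w(4)
    by metis
qed

lemma Pall_listed:
  assumes "distinct R1" "(x, y) \<in> Pall Omega B R1" "y \<in> set R1"
  shows "listed_above R1 x y"
  using assms(2,3) unfolding Pall_def
proof (induction rule: trancl_induct)
  case (base y) thus ?case using Ptilde_listed[OF assms(1)] by blast
next
  case (step y z)
  have "y \<in> set R1" using step(2) unfolding Ptilde_def
    using alpha_SomeD by fastforce
  thus ?case using step Ptilde_listed[OF assms(1)] listed_above_trans[OF assms(1)] by blast
qed


lemma sorted_wrt_strict_unique:
  fixes u' :: "'c \<Rightarrow> real"
  assumes "sorted_wrt (\<lambda>x y. u' x > u' y) L1" "sorted_wrt (\<lambda>x y. u' x > u' y) L2"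
    "set L1 = set L2"
  shows "L1 = L2"
  using assms
proof (induction L1 arbitrary: L2)
  case Nil thus ?case by simp
next
  case (Cons x xs)
  then obtain y ys where L2: "L2 = y # ys" by (cases L2) auto
  have "x = y"
  proof (rule ccontr)
    assume "x \<noteq> y"
    have "y \<in> set xs" using Cons.prems(3) L2 \<open>x \<noteq> y\<close> by auto
    hence "u' y < u' x" using Cons.prems(1) by auto
    moreover have "x \<in> set ys" using Cons.prems(3) L2 \<open>x \<noteq> y\<close> by auto
    hence "u' x < u' y" using Cons.prems(2) L2 by auto
    ultimately show False by simp
  qed
  have "x \<notin> set xs" using Cons.prems(1) by auto
  moreover have "x \<notin> set ys" using Cons.prems(2) L2 \<open>x = y\<close> by auto
  ultimately have "set xs = set ys" using Cons.prems(3) L2 \<open>x = y\<close> by auto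
  thus ?case using Cons L2 \<open>x = y\<close> by auto
qed

lemma rho_exists:
  fixes u' :: "'c \<Rightarrow> real"
  assumes "finite C" "inj_on u' C"
  shows "\<exists>L. set L = C \<and> sorted_wrt (\<lambda>x y. u' x > u' y) L"
proof -
  obtain xs where xs: "set xs = C" "distinct xs" using finite_distinct_list[OF assms(1)] by auto
  define ys where "ys = sort_key (\<lambda>x. - u' x) xs"
  have s: "sorted (map (\<lambda>x. - u' x) ys)" unfolding ys_def by simp
  have d: "distinct ys" "set ys = C" unfolding ys_def using xs by auto
  have "sorted_wrt (\<lambda>x y. u' x > u' y) ys"
    unfolding sorted_wrt_iff_nth_less
  proof (intro allI impI)
    fix i j assume ij: "i < j" "j < length ys"
    have "- u' (ys!i) \<le> - u' (ys!j)" using s ij unfolding sorted_iff_nth_mono_less by auto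
    moreover have "ys!i \<noteq> ys!j" using d ij nth_eq_iff_index_eq by fastforce
    hence "u' (ys!i) \<noteq> u' (ys!j)" using assms(2) d ij unfolding inj_on_def
      by (metis nth_mem order.strict_trans)
    ultimately show "u' (ys!i) > u' (ys!j)" by simp
  qed
  thus ?thesis using d by blast
qed

lemma rho_props:
  assumes "finite C" "inj_on u' C"
  shows "set (rho C u') = C \<and> sorted_wrt (\<lambda>x y. u' x > u' y) (rho C u')"
proof -
  obtain L where L: "set L = C \<and> sorted_wrt (\<lambda>x y. u' x > u' y) L" using rho_exists[OF assms] by blast
  have "(THE L. set L = C \<and> sorted_wrt (\<lambda>x y. u' x > u' y) L) = L"
    apply (rule the_equality) using L sorted_wrt_strict_unique by (auto intro: sorted_wrt_strict_unique)
  thus ?thesis unfolding rho_def using L by simp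
qed

lemma sorted_strict_distinct:
  assumes "sorted_wrt (\<lambda>x y. u' x > (u' y::real)) L" shows "distinct L"
  using assms by (induction L) auto

lemma rho_ROL:
  assumes "finite C" "inj_on u' C"
  shows "is_ROL C (rho C u')"
  using rho_props[OF assms] sorted_strict_distinct unfolding is_ROL_def by blast

lemma rho_listed:
  assumes "finite C" "inj_on u' C" "listed_above (rho C u') a b"
  shows "u' a > u' b"
  using assms(3) rho_props[OF assms(1,2)] unfolding listed_above_def sorted_wrt_iff_nth_less
  by blast

lemma rho_good:
  assumes "finite C" "inj_on u' C" "\<forall>\<omega>\<in>Omega. B \<omega> \<subseteq> C"
  shows "good Omega B u' (rho C u')"
  unfolding good_def
proof (intro ballI impI)
  fix \<omega> assume w: "\<omega> \<in> Omega" "B \<omega> \<noteq> {}"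
  let ?L = "rho C u'"
  have P: "set ?L = C" "sorted_wrt (\<lambda>x y. u' x > u' y) ?L" using rho_props[OF assms(1,2)] by auto
  have "alpha ?L (B \<omega>) \<noteq> None" unfolding alpha_def find_None_iff
    using w assms(3) P by auto
  then obtain a where a: "alpha ?L (B \<omega>) = Some a" by auto
  obtain k where k: "k < length ?L" "?L!k = a" "\<forall>j<k. ?L!j \<notin> B \<omega>"
    using alpha_SomeD[OF a] by auto
  have "\<forall>c\<in>B \<omega>. u' c \<le> u' a"
  proof
    fix c assume c: "c \<in> B \<omega>"
    then obtain m where m: "m < length ?L" "?L!m = c" using P assms(3) w(1)
      by (metis in_set_conv_nth subsetD)
    have "\<not> m < k" using k m c by auto
    thus "u' c \<le> u' a" using P(2) k m unfolding sorted_wrt_iff_nth_less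
      by (metis less_eq_real_def linorder_neqE_nat)
  qed
  thus "\<exists>a. alpha ?L (B \<omega>) = Some a \<and> is_best u' (B \<omega>) a"
    using a alpha_SomeD[OF a] unfolding is_best_def by blast
qed

theorem propositionB1:
  fixes C :: "'c set" and Omega :: "'s set" and B :: "'s \<Rightarrow> 'c set"
    and u :: "'c \<Rightarrow> real" and R :: "'c list"
  assumes finC: "finite C"
    and BsubC: "\<forall>\<omega>\<in>Omega. B \<omega> \<subseteq> C"
    and finB: "finite (B ` Omega)"
    and strict_u: "inj_on u C"
    and ROL_R: "is_ROL C R"
    and R_best: "\<forall>\<omega>\<in>Omega. B \<omega> \<noteq> {} \<longrightarrow> (\<exists>a. alpha R (B \<omega>) = Some a \<and> is_best u (B \<omega>) a)"
  shows
    "(\<forall>R'. is_ROL C R' \<longrightarrow>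
        ((\<forall>\<omega>\<in>Omega. B \<omega> \<noteq> {} \<longrightarrow> (\<exists>a. alpha R' (B \<omega>) = Some a \<and> is_best u (B \<omega>) a))
          \<longleftrightarrow> R' \<in> Rstar C Omega B R))
   \<and> (\<forall>R'\<in>Rstar C Omega B R. Pall Omega B R' = Pall Omega B R)
   \<and> (\<forall>u' R''. inj_on u' C \<longrightarrow> is_ROL C R'' \<longrightarrow>
        (\<forall>\<omega>\<in>Omega. B \<omega> \<noteq> {} \<longrightarrow> (\<exists>a. alpha R'' (B \<omega>) = Some a \<and> is_best u' (B \<omega>) a)) \<longrightarrow>
        (Pall Omega B R'' = Pall Omega B R \<longleftrightarrow> u' \<in> Ustar C Omega B R))"
proof -
  have gR: "good Omega B u R" using R_best unfolding good_def by blast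
  have I: "good Omega B u R' \<longleftrightarrow> R' \<in> Rstar C Omega B R" if rol: "is_ROL C R'" for R'
  proof
    assume g: "good Omega B u R'"
    have dR': "distinct R'" using rol unfolding is_ROL_def by auto
    have c1: "\<forall>\<omega>\<in>Omega. \<forall>a. alpha R (B \<omega>) = Some a \<longrightarrow> a \<in> set R'"
    proof (intro ballI allI impI)
      fix \<omega> a assume w: "\<omega> \<in> Omega" "alpha R (B \<omega>) = Some a"
      have "alpha R' (B \<omega>) = Some a" using good_alpha_eq[OF strict_u BsubC g gR w(1)] w(2) by simp
      thus "a \<in> set R'" using alpha_SomeD by fast
    qed
    have PE: "Pall Omega B R' = Pall Omega B R" using good_Pall_eq[OF strict_u BsubC g gR] .
    have c2: "\<not> (\<exists>c c'. listed_above R' c' c \<and> (c, c') \<in> Pall Omega B R)"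
    proof
      assume "\<exists>c c'. listed_above R' c' c \<and> (c, c') \<in> Pall Omega B R"
      then obtain c c' where cc: "listed_above R' c' c" "(c, c') \<in> Pall Omega B R'"
        using PE by auto
      have "c' \<in> set R'" using cc(1) unfolding listed_above_def by auto
      hence "listed_above R' c c'" using Pall_listed[OF dR' cc(2)] by blast
      thus False using listed_above_asym[OF dR' cc(1)] by blast
    qed
    show "R' \<in> Rstar C Omega B R" unfolding Rstar_def using rol c1 c2 by blast
  next
    assume r: "R' \<in> Rstar C Omega B R"
    have dR': "distinct R'" using rol unfolding is_ROL_def by auto
    show "good Omega B u R'" unfolding good_def
    proof (intro ballI impI)
      fix \<omega> assume w: "\<omega> \<in> Omega" "B \<omega> \<noteq> {}"
      then obtain a where a: "alpha R (B \<omega>) = Some a" "is_best u (B \<omega>) a"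
        using R_best by blast
      have aR': "a \<in> set R'" using r w a unfolding Rstar_def by blast
      have "\<forall>b\<in>B \<omega>. b \<noteq> a \<longrightarrow> \<not> listed_above R' b a"
      proof (intro ballI impI notI)
        fix b assume b: "b \<in> B \<omega>" "b \<noteq> a" "listed_above R' b a"
        have "(a, b) \<in> Ptilde Omega B R" unfolding Ptilde_def using w a b by blast
        hence "(a, b) \<in> Pall Omega B R" unfolding Pall_def by blast
        thus False using r b(3) unfolding Rstar_def by blast
      qed
      hence "alpha R' (B \<omega>) = Some a"
        using alpha_intro[OF dR' _ aR'] a unfolding is_best_def by blast
      thus "\<exists>a. alpha R' (B \<omega>) = Some a \<and> is_best u (B \<omega>) a" using a by blast
    qed
  qed
  have II: "Pall Omega B R' = Pall Omega B R" if r: "R' \<in> Rstar C Omega B R" for R'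
  proof -
    have "is_ROL C R'" using r unfolding Rstar_def by blast
    hence "good Omega B u R'" using I r by blast
    thus ?thesis using good_Pall_eq[OF strict_u BsubC _ gR] by blast
  qed
  have III: "Pall Omega B R'' = Pall Omega B R \<longleftrightarrow> u' \<in> Ustar C Omega B R"
    if iu: "inj_on u' C" and g'': "good Omega B u' R''" for u' R''
  proof -
    let ?L = "rho C u'"
    have gL: "good Omega B u' ?L" using rho_good[OF finC iu BsubC] .
    have E: "Pall Omega B R'' = Pall Omega B ?L" using good_Pall_eq[OF iu BsubC g'' gL] .
    show ?thesis
    proof
      assume h: "Pall Omega B R'' = Pall Omega B R"
      have c1: "\<forall>\<omega>\<in>Omega. \<forall>a. alpha R (B \<omega>) = Some a \<longrightarrow> a \<in> set ?L"
      proof (intro ballI allI impI)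
        fix \<omega> a assume w: "\<omega> \<in> Omega" "alpha R (B \<omega>) = Some a"
        have "a \<in> B \<omega>" using alpha_SomeD[OF w(2)] by simp
        thus "a \<in> set ?L" using rho_props[OF finC iu] BsubC w(1) by blast
      qed
      have c2: "\<not> (\<exists>c c'. listed_above ?L c' c \<and> (c, c') \<in> Pall Omega B R)"
      proof
        assume "\<exists>c c'. listed_above ?L c' c \<and> (c, c') \<in> Pall Omega B R"
        then obtain c c' where cc: "listed_above ?L c' c" "(c, c') \<in> Pall Omega B ?L"
          using h E by auto
        have "u' c' > u' c" using rho_listed[OF finC iu cc(1)] .
        moreover have "u' c' < u' c" using good_Pall_lt[OF iu BsubC gL cc(2)] .
        ultimately show False by simp
      qed
      show "u' \<in> Ustar C Omega B R" unfolding Ustar_def Rstar_def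
        using iu rho_ROL[OF finC iu] c1 c2 by blast
    next
      assume "u' \<in> Ustar C Omega B R"
      hence "?L \<in> Rstar C Omega B R" unfolding Ustar_def by blast
      thus "Pall Omega B R'' = Pall Omega B R" using II E by simp
    qed
  qed
  show ?thesis unfolding good_def[symmetric]
  proof (intro conjI allI impI ballI)
    fix R' assume "is_ROL C R'" thus "good Omega B u R' \<longleftrightarrow> R' \<in> Rstar C Omega B R" by (rule I)
  next
    fix R' assume "R' \<in> Rstar C Omega B R" thus "Pall Omega B R' = Pall Omega B R" by (rule II)
  next
    fix u' R'' assume "inj_on u' C" "is_ROL C R''" "good Omega B u' R''"
    thus "Pall Omega B R'' = Pall Omega B R \<longleftrightarrow> u' \<in> Ustar C Omega B R" using III by blast
  qed
qed

end
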